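(* Let $r,s\in(0,1)$ satisfy \[s = 2r(1-r)\qquad\text{and}\qquad r = 3s(1-s)^2 + 3s^2(1-s).\] Then the number $\beta = 1/r - 1$ is not an algebraic integer.
   Context: An algebraic integer is a complex number that is a root of a monic polynomial with integer coefficients. *)

theory Defs
  imports "HOL-Computational_Algebra.Polynomial"
begin

end

theory Submission
  imports Defs "HOL-Computational_Algebra.Computational_Algebra" "HOL-Computational_Algebra.Field_as_Ring" "HOL-Computational_Algebra.Polynomial_Factorial"
begin


lemma map_of_rat_mult: "map_poly (of_rat :: rat \<Rightarrow> 'a::field_char_0) (p * q) = map_poly of_rat p * map_poly of_rat q"
  by (simp add: poly_eq_iff coeff_map_poly coeff_mult of_rat_sum of_rat_mult)

lemma map_of_rat_add: "map_poly (of_rat :: rat \<Rightarrow> 'a::field_char_0) (p + q) = map_poly of_rat p + map_poly of_rat q"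
  by (simp add: poly_eq_iff coeff_map_poly of_rat_add)

lemma no_int_root: "(m::int)^3 - 3*m^2 + 15*m - 25 \<noteq> 0"
proof
  assume h: "m^3 - 3*m^2 + 15*m - 25 = 0"
  define k where "k = m - 1"
  have e: "k*k*k + 12*k - 12 = 0" using h unfolding k_def by (simp add: algebra_simps power2_eq_square power3_eq_cube)
  show False
  proof (cases "k \<le> 0")
    case True
    have "k*k*k \<le> 0" using True by (simp add: mult_nonneg_nonpos)
    then show False using e True by linarith
  next
    case False
    have "k*k*k \<ge> 1" using False
      by (metis int_one_le_iff_zero_less mult_pos_pos not_le)
    then show False using e False by linarith
  qed
qed

lemma no_rat_root: "5*(x::rat)^3 - 3*x^2 + 3*x - 1 \<noteq> 0"
proof
  assume h: "5*x^3 - 3*x^2 + 3*x - 1 = 0"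
  define y where "y = 5*x"
  have e: "y^3 - 3*y^2 + 15*y - 25 = 0" using h unfolding y_def
    by (simp add: algebra_simps power2_eq_square power3_eq_cube)
  have "poly (map_poly of_int [:-25,15,-3,1:]) y = 0"
    using e by (simp add: map_poly_pCons algebra_simps power2_eq_square power3_eq_cube)
  hence "algebraic_int y"
    by (subst algebraic_int_altdef_ipoly) (rule exI[of _ "[:-25,15,-3,1:]"], simp)
  moreover have "y \<in> \<rat>" by (metis Rats_of_rat of_rat_eq_id id_apply)
  ultimately have "y \<in> \<int>" using rational_algebraic_int_is_int by blast
  then obtain m where "y = of_int m" by (auto elim: Ints_cases)
  with e have "of_int (m^3 - 3*m^2 + 15*m - 25) = (0::rat)" by simp
  hence "m^3 - 3*m^2 + 15*m - 25 = 0" by (simp only: of_int_eq_0_iff)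
  with no_int_root show False by blast
qed

lemma deg1_root: assumes "degree (f::rat poly) = 1" shows "\<exists>r. poly f r = 0"
proof -
  obtain a b where ab: "f = [:a,b:]" "b \<noteq> 0" using degree1_coeffs[OF assms] by blast
  show ?thesis by (rule exI[of _ "-a/b"]) (simp add: ab)
qed

lemma Q_no_root: "poly [:-1,3,-3,5:] (r::rat) \<noteq> 0"
proof
  assume "poly [:-1,3,-3,5:] r = 0"
  hence "5*r^3 - 3*r^2 + 3*r - 1 = 0" by (simp add: algebra_simps power2_eq_square power3_eq_cube)
  with no_rat_root show False by blast
qed

lemma coeff_int:
  fixes H P :: "rat poly"
  assumes P: "\<forall>i. coeff P i \<in> \<int>" and PQ: "P = [:-1,3,-3,5:] * H"
  shows "coeff H n \<in> \<int>"
proof (induction n rule: less_induct)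
  case (less n)
  define R :: "rat poly" where "R = [:3,-3,5:]"
  have QH: "P = smult (-1) H + pCons 0 (R * H)" using PQ by (simp add: R_def)
  show ?case
  proof (cases n)
    case 0
    have "coeff P 0 = - coeff H 0" using QH by simp
    then show ?thesis using P 0 by (metis Ints_minus minus_minus)
  next
    case (Suc m)
    have c: "coeff P n = - coeff H n + coeff (R*H) m" using QH Suc by simp
    have cR: "coeff (R*H) m \<in> \<int>"
      unfolding coeff_mult
    proof (rule Ints_sum, rule Ints_mult)
      fix i assume "i \<in> {..m}"
      show "coeff H (m-i) \<in> \<int>" using less Suc by simp
      show "coeff R i \<in> \<int>" unfolding R_def
        by (cases i; cases "i - 1"; cases "i - 2"; simp add: coeff_pCons split: nat.splits)
    qed
    have "coeff H n = coeff (R*H) m - coeff P n" using c by simp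
    then show ?thesis using P cR by (metis Ints_diff)
  qed
qed

lemma main_lemma:
  fixes x :: "'a::field_char_0"
  assumes ex: "5*x^3 - 3*x^2 + 3*x - 1 = 0"
  shows "\<not> algebraic_int x"
proof
  assume "algebraic_int x"
  then obtain p :: "int poly" where pp: "poly (map_poly of_int p) x = 0" "lead_coeff p = 1"
    by (auto simp: algebraic_int_altdef_ipoly)
  define Q :: "rat poly" where "Q = [:-1,3,-3,5:]"
  define P :: "rat poly" where "P = map_poly of_int p"
  have evQ: "poly (map_poly of_rat Q) x = 0"
    using ex by (simp add: Q_def map_poly_pCons algebra_simps power2_eq_square power3_eq_cube)
  have "map_poly of_rat P = (map_poly of_int p :: 'a poly)"
    unfolding P_def by (simp add: map_poly_map_poly o_def)
  hence evP: "poly (map_poly of_rat P) x = 0" using pp by simp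
  define g where "g = gcd Q P"
  have "g = fst (bezout_coefficients Q P) * Q + snd (bezout_coefficients Q P) * P"
    unfolding g_def by (simp add: bezout_coefficients_fst_snd)
  hence evg: "poly (map_poly of_rat g) x = 0"
    by (simp add: map_of_rat_mult map_of_rat_add evP evQ)
  have Qnz: "Q \<noteq> 0" and dQ: "degree Q = 3" by (simp_all add: Q_def)
  have "g dvd Q" unfolding g_def by simp
  then obtain k where Qgk: "Q = g * k" by (elim dvdE)
  have gnz: "g \<noteq> 0" and knz: "k \<noteq> 0" using Qnz Qgk by auto
  have dsum: "degree g + degree k = 3" using dQ Qgk gnz knz by (simp add: degree_mult_eq)
  have "degree g \<noteq> 0"
  proof
    assume "degree g = 0"
    then obtain c where "g = [:c:]" using degree0_coeffs by blast
    with gnz evg show False by (simp add: map_poly_pCons)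
  qed
  moreover have "degree g \<noteq> 1"
  proof
    assume "degree g = 1"
    then obtain r where "poly g r = 0" using deg1_root by blast
    hence "poly Q r = 0" using Qgk by simp
    thus False using Q_no_root Q_def by simp
  qed
  moreover have "degree k \<noteq> 1"
  proof
    assume "degree k = 1"
    then obtain r where "poly k r = 0" using deg1_root by blast
    hence "poly Q r = 0" using Qgk by simp
    thus False using Q_no_root Q_def by simp
  qed
  ultimately have "degree k = 0" using dsum by linarith
  then obtain c where kc: "k = [:c:]" using degree0_coeffs by blast
  with knz have cnz: "c \<noteq> 0" by simp
  have "g dvd P" unfolding g_def by simp
  then obtain h where Pgh: "P = g * h" by (elim dvdE)
  have "g = Q * [:inverse c:]" using Qgk kc cnz
    by (simp add: mult.assoc flip: smult_one)
  hence PQH: "P = Q * ([:inverse c:] * h)" using Pgh by (simp add: mult.assoc)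
  define H where "H = [:inverse c:] * h"
  have Pint: "\<forall>i. coeff P i \<in> \<int>" unfolding P_def by (simp add: coeff_map_poly)
  have Hint: "\<And>n. coeff H n \<in> \<int>"
    using coeff_int[OF Pint] PQH unfolding H_def Q_def by blast
  have "lead_coeff P = 1" unfolding P_def using pp by (simp add: degree_map_poly coeff_map_poly)
  also have "lead_coeff P = lead_coeff Q * lead_coeff H" using PQH H_def by (simp add: lead_coeff_mult)
  finally have "5 * lead_coeff H = 1" by (simp add: Q_def)
  moreover obtain m where "lead_coeff H = of_int m" using Hint by (metis Ints_cases)
  ultimately have "of_int (5 * m) = (of_int 1 :: rat)" by simp
  hence "5 * m = 1" by (simp only: of_int_eq_iff)
  thus False by presburger
qed


lemma real_eq:
  fixes r s :: real
  assumes "0 < r" "r < 1"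
    and "s = 2 * r * (1 - r)"
    and "r = 3 * s * (1 - s)^2 + 3 * s^2 * (1 - s)"
  shows "5*(1/r-1)^3 - 3*(1/r-1)^2 + 3*(1/r-1) - 1 = 0"
proof -
  have "r = 3 * s * (1 - s)" using assms(4) by (simp add: algebra_simps power2_eq_square)
  hence "r = 6 * r * (1-r) * (1 - 2*r*(1-r))" using assms(3) by (simp add: algebra_simps)
  hence h: "1 = 6 * (1-r) * (1 - 2*r*(1-r))" using assms(1)
    by (metis (no_types, lifting) mult.assoc mult.left_commute mult_cancel_left1 less_irrefl)
  have rnz: "r \<noteq> 0" using assms(1) by simp
  have "5*(1/r-1)^3 - 3*(1/r-1)^2 + 3*(1/r-1) - 1
        = (5*(1-r)^3 - 3*(1-r)^2*r + 3*(1-r)*r^2 - r^3) / r^3"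
    using rnz by (simp add: field_simps power2_eq_square power3_eq_cube)
  also have "5*(1-r)^3 - 3*(1-r)^2*r + 3*(1-r)*r^2 - r^3 = 0"
    using h by (simp add: algebra_simps power2_eq_square power3_eq_cube)
  finally show ?thesis by simp
qed

theorem mainTheorem2:
  fixes r s :: real
  assumes "0 < r" "r < 1" "0 < s" "s < 1"
    and "s = 2 * r * (1 - r)"
    and "r = 3 * s * (1 - s)^2 + 3 * s^2 * (1 - s)"
  shows "\<not> algebraic_int (complex_of_real (1 / r - 1))"
proof (rule main_lemma)
  have "5*(1/r-1)^3 - 3*(1/r-1)^2 + 3*(1/r-1) - 1 = 0"
    using real_eq[OF assms(1,2,5,6)] .
  hence "complex_of_real (5*(1/r-1)^3 - 3*(1/r-1)^2 + 3*(1/r-1) - 1) = 0" by simp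
  thus "5 * (complex_of_real (1/r-1))^3 - 3 * (complex_of_real (1/r-1))^2 + 3 * complex_of_real (1/r-1) - 1 = 0"
    by (simp only: of_real_diff of_real_mult of_real_power of_real_numeral of_real_1 of_real_add)
qed

end
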